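(* Let $\eta,\theta\in\mathbb{R}$, $\sigma,\tau\ge0$ with $\sigma\tau\ne1$, and $t>0$. The solution $\mathbb{H}_t=(h_0,h_1,\dots)\in\mathcal{Q}$ with $h_0=0$ of the equation $$(1+\sigma t)\mathbb{H}_t\mathbb{F}=\mathbb{E}+\eta\mathbb{F}+\sigma\mathbb{F}^2+(\theta-\eta t)\mathbb{H}_t-\sigma(t+\tau)\mathbb{F}\mathbb{H}_t+(t+\tau)(1+\sigma t)\mathbb{H}_t^2$$ is $$\mathbb{H}_t=\frac{1}{1+\sigma t}(\mathbb{E}+\eta\mathbb{F}+\sigma\mathbb{F}^2)\,\varphi_t(\mathbb{D})\,\mathbb{D},$$ where $\varphi_t(z)=\sum_{k=1}^\infty c_k(t)z^{k-1}$ satisfies $$(z^2+\eta z+\sigma)(t+\tau)\varphi_t^2+\big((\theta-t\eta)z-2t\sigma-\sigma\tau-1\big)\varphi_t+t\sigma+1=0$$ and $\varphi_t(0)=1$, and $\varphi_t(\mathbb{D})=\sum_{k\ge1}c_k(t)\mathbb{D}^{k-1}$.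
   Context: $\mathcal{Q}$ denotes the real linear space of all infinite sequences $\mathbb{P}=(p_0,p_1,\dots)$ of real polynomials in $x$, with product $\mathbb{P}\mathbb{Q}=\mathbb{R}=(r_0,r_1,\dots)$, $r_k(x)=\sum_{j=0}^{\deg q_k}[q_k]_j\,p_j(x)$ for $\mathbb{Q}=(q_0,q_1,\dots)$, where $[q]_j$ is the coefficient of $x^j$ in $q$ (corresponding to composition of linear maps of the polynomial space). Powers are with respect to this product. Special elements: $\mathbb{E}=(1,x,x^2,\dots)$ (identity), $\mathbb{F}=(x,x^2,\dots)$, $\mathbb{D}=(0,1,x,x^2,\dots)$. For a power series $\psi(z)=\sum_k a_kz^k$, $\psi(\mathbb{D})=\sum_ka_k\mathbb{D}^k$ is a well-defined element of $\mathcal{Q}$ whose $n$-th component is $\sum_{j=0}^n a_jx^{n-j}$. *)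

theory Defs
  imports "HOL-Computational_Algebra.Polynomial" "HOL-Computational_Algebra.Formal_Power_Series"
begin

type_synonym qseq = "nat \<Rightarrow> real poly"

definition qmul :: "qseq \<Rightarrow> qseq \<Rightarrow> qseq" where
  "qmul P Q = (\<lambda>k. \<Sum>j\<le>degree (Q k). smult (coeff (Q k) j) (P j))"

definition qadd :: "qseq \<Rightarrow> qseq \<Rightarrow> qseq" where
  "qadd P Q = (\<lambda>k. P k + Q k)"

definition qscale :: "real \<Rightarrow> qseq \<Rightarrow> qseq" where
  "qscale c P = (\<lambda>k. smult c (P k))"

definition qE :: qseq where "qE = (\<lambda>n. monom 1 n)"
definition qF :: qseq where "qF = (\<lambda>n. monom 1 (Suc n))"
definition qD :: qseq where "qD = (\<lambda>n. if n = 0 then 0 else monom 1 (n - 1))"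

definition qseries_D :: "real fps \<Rightarrow> qseq" where
  "qseries_D \<psi> = (\<lambda>n. \<Sum>j\<le>n. monom (fps_nth \<psi> j) (n - j))"

end

theory Submission imports Defs begin

lemma smult_sum_right: "smult c (\<Sum>i\<in>A. f i) = (\<Sum>i\<in>A. smult c (f i))"
  by (induction A rule: infinite_finite_induct) (auto simp: smult_add_right)

definition lmap :: "qseq \<Rightarrow> real poly \<Rightarrow> real poly" where
  "lmap P q = (\<Sum>j\<le>degree q. smult (coeff q j) (P j))"

lemma qmul_lmap: "qmul P Q = (\<lambda>k. lmap P (Q k))"
  by (simp add: qmul_def lmap_def)

lemma lmap_le: assumes "degree q \<le> N" shows "lmap P q = (\<Sum>j\<le>N. smult (coeff q j) (P j))"
proof -
  have "(\<Sum>j\<le>N. smult (coeff q j) (P j)) = (\<Sum>j\<le>degree q. smult (coeff q j) (P j)) + (\<Sum>j\<in>{degree q<..N}. smult (coeff q j) (P j))"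
    using assms by (subst sum.union_disjoint[symmetric]) (auto intro!: sum.cong simp: ivl_disj_un)
  also have "(\<Sum>j\<in>{degree q<..N}. smult (coeff q j) (P j)) = 0"
    by (intro sum.neutral) (auto simp: coeff_eq_0)
  finally show ?thesis by (simp add: lmap_def)
qed

lemma lmap_add: "lmap P (p + q) = lmap P p + lmap P q"
proof -
  define N where "N = max (degree p) (degree q)"
  have "degree (p+q) \<le> N" unfolding N_def by (rule degree_add_le) auto
  then show ?thesis
    by (simp add: lmap_le[of _ N] N_def sum.distrib smult_add_left)
qed

lemma lmap_smult: "lmap P (smult c p) = smult c (lmap P p)"
  by (simp add: lmap_le[of "smult c p" "degree p"] lmap_def smult_sum_right smult_smult mult.commute)

lemma lmap_0 [simp]: "lmap P 0 = 0" by (simp add: lmap_def)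

lemma lmap_sum: "finite A \<Longrightarrow> lmap P (\<Sum>i\<in>A. f i) = (\<Sum>i\<in>A. lmap P (f i))"
  by (induction A rule: finite_induct) (auto simp: lmap_add)

lemma lmap_monom: "lmap P (monom c n) = smult c (P n)"
proof -
  have "lmap P (monom c n) = (\<Sum>j\<le>n. smult (coeff (monom c n) j) (P j))"
    by (rule lmap_le) (rule degree_monom_le)
  also have "\<dots> = (\<Sum>j\<le>n. if j = n then smult c (P j) else 0)"
    by (intro sum.cong) (auto simp: coeff_monom)
  finally show ?thesis by simp
qed

lemma lmap_expand: "lmap P q = lmap P (\<Sum>i\<le>degree q. monom (coeff q i) i)"
  by (simp add: poly_as_sum_of_monoms)

lemma lmap_padd: "lmap (\<lambda>n. P n + Q n) q = lmap P q + lmap Q q"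
  by (simp add: lmap_def smult_add_right sum.distrib)

lemma lmap_psmult: "lmap (\<lambda>n. smult c (P n)) q = smult c (lmap P q)"
  by (simp add: lmap_def smult_sum_right smult_smult mult.commute)

lemma lmap_pmult: "lmap (\<lambda>n. a * P n) q = a * lmap P q"
  by (simp add: lmap_def sum_distrib_left)

lemma lmap_M: "lmap (\<lambda>n. a * monom 1 n) q = a * q"
proof -
  have "lmap (\<lambda>n. a * monom 1 n) q = a * lmap (\<lambda>n. monom 1 n) q" by (rule lmap_pmult)
  also have "lmap (\<lambda>n. monom 1 n) q = q"
    by (simp add: lmap_def smult_monom poly_as_sum_of_monoms)
  finally show ?thesis .
qed

lemma lmap_qmul: "lmap (qmul P Q) q = lmap P (lmap Q q)"
  by (simp add: qmul_lmap lmap_def[of "\<lambda>k. lmap P (Q k)"] lmap_def[of Q] lmap_sum lmap_smult)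

abbreviation S where "S \<equiv> qseries_D"

lemma coeff_S: "coeff (S f n) m = (if m \<le> n then fps_nth f (n - m) else 0)"
proof -
  have "coeff (S f n) m = (\<Sum>j\<le>n. if j = n - m \<and> m \<le> n then fps_nth f j else 0)"
    unfolding qseries_D_def coeff_sum by (intro sum.cong) (auto simp: coeff_monom)
  also have "\<dots> = (if m \<le> n then fps_nth f (n - m) else 0)"
    by (cases "m \<le> n") (auto simp: sum.delta)
  finally show ?thesis .
qed

lemma degree_S: "degree (S f n) \<le> n"
  by (rule degree_le) (auto simp: coeff_S)

lemma S_add: "S (f + g) n = S f n + S g n"
  by (simp add: poly_eq_iff coeff_S)

lemma S_diff: "S (f - g) n = S f n - S g n"
  by (simp add: poly_eq_iff coeff_S)

lemma S_const: "S (fps_const c * f) n = smult c (S f n)"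
  by (simp add: poly_eq_iff coeff_S)

lemma S_one: "S 1 n = monom 1 n"
  by (auto simp: poly_eq_iff coeff_S coeff_monom)

lemma S_zero: "S 0 n = 0"
  by (auto simp: poly_eq_iff coeff_S)

lemma S_Suc: "S f (Suc i) = monom (fps_nth f 0) (Suc i) + S (fps_shift 1 f) i"
  by (auto simp: poly_eq_iff coeff_S coeff_monom Suc_diff_le)

lemma S_mult: "lmap (S f) (S g n) = S (f * g) n"
proof -
  have "lmap (S f) (S g n) = (\<Sum>j\<le>n. smult (fps_nth g j) (S f (n - j)))"
    unfolding qseries_D_def[of g] by (simp add: lmap_sum lmap_monom)
  also have "\<dots> = S (f * g) n"
  proof (rule poly_eqI)
    fix m
    have "coeff (\<Sum>j\<le>n. smult (fps_nth g j) (S f (n - j))) m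
        = (\<Sum>j\<le>n. if j \<le> n - m \<and> m \<le> n then fps_nth g j * fps_nth f (n - m - j) else 0)"
      unfolding coeff_sum by (intro sum.cong) (auto simp: coeff_S diff_commute add.commute)
    also have "\<dots> = (if m \<le> n then (\<Sum>j\<le>n - m. fps_nth g j * fps_nth f (n - m - j)) else 0)"
    proof (cases "m \<le> n")
      case True
      have "(\<Sum>j\<le>n. if j \<le> n - m then fps_nth g j * fps_nth f (n - m - j) else 0)
          = (\<Sum>j\<le>n - m. fps_nth g j * fps_nth f (n - m - j))"
        by (rule sum.mono_neutral_cong_right) auto
      then show ?thesis using True by simp
    qed simp
    also have "\<dots> = coeff (S (f * g) n) m"
      by (simp add: coeff_S fps_mult_nth mult.commute[of f] atLeast0AtMost)
    finally show "coeff (\<Sum>j\<le>n. smult (fps_nth g j) (S f (n - j))) m = coeff (S (f * g) n) m" .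
  qed
  finally show ?thesis .
qed

lemma S_shift: "lmap (S f) (monom 1 1 * q) = lmap (S (fps_shift 1 f)) q + smult (fps_nth f 0) (monom 1 1 * q)"
proof -
  define N where "N = degree q"
  have q: "q = (\<Sum>i\<le>N. monom (coeff q i) i)" by (simp add: poly_as_sum_of_monoms N_def)
  have xq: "monom 1 1 * q = (\<Sum>i\<le>N. monom (coeff q i) (Suc i))"
    by (subst q) (simp add: sum_distrib_left mult_monom)
  have "lmap (S f) (monom 1 1 * q) = (\<Sum>i\<le>N. smult (coeff q i) (monom (fps_nth f 0) (Suc i) + S (fps_shift 1 f) i))"
    unfolding xq by (simp add: lmap_sum lmap_monom S_Suc)
  also have "\<dots> = (\<Sum>i\<le>N. smult (coeff q i) (S (fps_shift 1 f) i)) + smult (fps_nth f 0) (\<Sum>i\<le>N. monom (coeff q i) (Suc i))"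
    by (simp add: smult_add_right sum.distrib smult_sum_right smult_monom mult.commute)
  also have "(\<Sum>i\<le>N. smult (coeff q i) (S (fps_shift 1 f) i)) = lmap (S (fps_shift 1 f)) q"
    by (simp add: lmap_def N_def)
  finally show ?thesis unfolding xq .
qed

lemma lmap_S_add: "lmap (S (f + g)) q = lmap (S f) q + lmap (S g) q"
proof -
  have "S (f + g) = (\<lambda>n. S f n + S g n)" by (simp add: S_add fun_eq_iff)
  then show ?thesis by (simp add: lmap_padd)
qed

lemma lmap_S_const: "lmap (S (fps_const c * f)) q = smult c (lmap (S f) q)"
proof -
  have "S (fps_const c * f) = (\<lambda>n. smult c (S f n))" by (simp add: S_const fun_eq_iff)
  then show ?thesis by (simp add: lmap_psmult)
qed

lemma lmap_Sa:
  fixes \<phi> :: "real fps"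
  assumes "fps_nth \<phi> 0 = 1"
  shows "lmap (S (\<phi> * fps_X)) ((1 + monom \<eta> 1 + monom \<sigma> 2) * q)
     = lmap (S (\<phi> * fps_X + fps_const \<eta> * \<phi> + fps_const \<sigma> * fps_shift 1 \<phi>)) q + smult \<sigma> (monom 1 1 * q)"
proof -
  have e1: "monom \<eta> 1 * q = smult \<eta> (monom 1 1 * q)" by (simp add: smult_monom_mult)
  have e2: "monom \<sigma> 2 * q = smult \<sigma> (monom 1 1 * (monom 1 1 * q))"
    by (simp add: smult_monom_mult mult.assoc[symmetric] mult_monom numeral_2_eq_2)
  have "lmap (S (\<phi> * fps_X)) ((1 + monom \<eta> 1 + monom \<sigma> 2) * q)
     = lmap (S (\<phi> * fps_X)) q + smult \<eta> (lmap (S (\<phi> * fps_X)) (monom 1 1 * q))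
       + smult \<sigma> (lmap (S (\<phi> * fps_X)) (monom 1 1 * (monom 1 1 * q)))"
    by (simp only: distrib_right e1 e2 lmap_add lmap_smult mult_1)
  also have "lmap (S (\<phi> * fps_X)) (monom 1 1 * q) = lmap (S \<phi>) q"
    by (simp only: S_shift fps_shift_times_fps_X') simp
  also have "lmap (S (\<phi> * fps_X)) (monom 1 1 * (monom 1 1 * q)) = lmap (S (fps_shift 1 \<phi>)) q + monom 1 1 * q"
    by (simp only: S_shift fps_shift_times_fps_X') (simp add: assms)
  finally show ?thesis
    by (simp add: lmap_S_add lmap_S_const smult_add_right)
qed

lemma qF_M: "qF = (\<lambda>n. monom 1 1 * monom 1 n)"
  by (simp add: qF_def mult_monom fun_eq_iff)

lemma qmul_H_F: "qmul H qF n = H (Suc n)"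
  by (simp add: qmul_lmap qF_def lmap_monom)

lemma qmul_F_H: "qmul qF H n = monom 1 1 * H n"
  by (simp add: qmul_lmap qF_M lmap_M)

lemma qA: "qadd (qadd qE (qscale \<eta> qF)) (qscale \<sigma> (qmul qF qF)) = (\<lambda>n. (1 + monom \<eta> 1 + monom \<sigma> 2) * monom 1 n)"
  unfolding qmul_lmap qF_def by (simp add: fun_eq_iff qadd_def qscale_def lmap_monom qE_def mult_monom smult_monom distrib_right numeral_2_eq_2)

lemma Hstar:
  fixes \<phi> :: "real fps"
  shows "qscale c (qmul (qmul (qadd (qadd qE (qscale \<eta> qF)) (qscale \<sigma> (qmul qF qF))) (S \<phi>)) qD)
     = (\<lambda>n. smult c ((1 + monom \<eta> 1 + monom \<sigma> 2) * S (\<phi> * fps_X) n))"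
proof (rule ext)
  fix n
  show "qscale c (qmul (qmul (qadd (qadd qE (qscale \<eta> qF)) (qscale \<sigma> (qmul qF qF))) (S \<phi>)) qD) n
     = smult c ((1 + monom \<eta> 1 + monom \<sigma> 2) * S (\<phi> * fps_X) n)"
  proof (cases n)
    case 0
    have "S (\<phi> * fps_X) 0 = 0" by (simp add: poly_eq_iff coeff_S)
    then show ?thesis using 0 by (simp add: qscale_def qmul_lmap qD_def)
  next
    case (Suc m)
    have "S (\<phi> * fps_X) (Suc m) = S \<phi> m" by (simp only: S_Suc fps_shift_times_fps_X') simp
    then show ?thesis using Suc by (simp only: qA) (simp add: qscale_def qmul_lmap qD_def lmap_monom lmap_M)
  qed
qed

lemma chiX: "fps_shift 1 (\<phi>::real fps) * fps_X = \<phi> - fps_const (fps_nth \<phi> 0)"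
  by (rule fps_ext) auto

lemma coeff_aK: "coeff ((1 + monom \<eta> 1 + monom \<sigma> 2) * p) m
   = coeff p m + (if m < 1 then 0 else \<eta> * coeff p (m - 1)) + (if m < 2 then 0 else \<sigma> * coeff p (m - 2))"
  by (simp add: distrib_right coeff_monom_mult)

lemma ring_id:
  fixes p X e s t u th :: "'a::comm_ring_1"
  shows "((1 + s*t)*1 + (th - e*t)*(p*X) + (t+u)*(p*p*X*X + e*p*p*X + s*p*(p - 1))) - (1 + s*t)*p
   = (X*X + e*X + s)*(t+u)*(p*p) + ((th - t*e)*X - (2*t*s + s*u + 1))*p + (t*s+1)"
  by (simp add: algebra_simps)

lemma ring_id2:
  fixes p X e s t u th :: "'a::comm_ring_1"
  assumes "(X*X + e*X + s)*(t+u)*(p*p) + ((th - t*e)*X - (2*t*s + s*u + 1))*p + (t*s+1) = 0"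
  shows "(1 + s*t)*p = (1 + s*t)*1 + (th - e*t)*(p*X) + (t+u)*(p*p*X*X + e*p*p*X + s*p*(p - 1))"
proof -
  have "((1 + s*t)*1 + (th - e*t)*(p*X) + (t+u)*(p*p*X*X + e*p*p*X + s*p*(p - 1))) - (1 + s*t)*p = 0"
    using ring_id[of s t th e p X u] assms by simp
  then show ?thesis by simp
qed

lemma series_id:
  fixes \<phi> :: "real fps"
  assumes h0: "fps_nth \<phi> 0 = 1"
    and hyp: "(fps_X ^ 2 + fps_const \<eta> * fps_X + fps_const \<sigma>) * fps_const (t + \<tau>) * \<phi> ^ 2
         + (fps_const (\<theta> - t * \<eta>) * fps_X - fps_const (2 * t * \<sigma> + \<sigma> * \<tau> + 1)) * \<phi>
         + fps_const (t * \<sigma> + 1) = 0"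
  shows "fps_const (1 + \<sigma> * t) * \<phi> = fps_const (1 + \<sigma> * t) * 1 + fps_const (\<theta> - \<eta> * t) * (\<phi> * fps_X)
      + fps_const (t + \<tau>) * ((\<phi> * fps_X + fps_const \<eta> * \<phi> + fps_const \<sigma> * fps_shift 1 \<phi>) * (\<phi> * fps_X))"
proof -
  have G: "(\<phi> * fps_X + fps_const \<eta> * \<phi> + fps_const \<sigma> * fps_shift 1 \<phi>) * (\<phi> * fps_X)
     = \<phi> * \<phi> * fps_X * fps_X + fps_const \<eta> * \<phi> * \<phi> * fps_X + fps_const \<sigma> * \<phi> * (\<phi> - 1)"
  proof -
    have "(\<phi> * fps_X + fps_const \<eta> * \<phi> + fps_const \<sigma> * fps_shift 1 \<phi>) * (\<phi> * fps_X)
       = \<phi> * \<phi> * fps_X * fps_X + fps_const \<eta> * \<phi> * \<phi> * fps_X + fps_const \<sigma> * \<phi> * (fps_shift 1 \<phi> * fps_X)"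
      by (simp add: algebra_simps)
    moreover have chi1: "fps_shift 1 \<phi> * fps_X = \<phi> - 1" using chiX[of \<phi>] h0 by simp
    ultimately show ?thesis by (simp only: chi1)
  qed
  have c: "fps_const (1 + \<sigma> * t) = 1 + fps_const \<sigma> * fps_const t"
          "fps_const (\<theta> - \<eta> * t) = fps_const \<theta> - fps_const \<eta> * fps_const t"
          "fps_const (t + \<tau>) = fps_const t + fps_const \<tau>"
          "fps_const (\<theta> - t * \<eta>) = fps_const \<theta> - fps_const t * fps_const \<eta>"
          "fps_const (2 * t * \<sigma> + \<sigma> * \<tau> + 1) = 2 * fps_const t * fps_const \<sigma> + fps_const \<sigma> * fps_const \<tau> + 1"
          "fps_const (t * \<sigma> + 1) = fps_const t * fps_const \<sigma> + 1"
    by (simp_all del: fps_const_add fps_const_mult fps_const_sub add: fps_const_add[symmetric] fps_const_mult[symmetric] fps_const_sub[symmetric] numeral_fps_const)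
  from hyp have hyp': "(fps_X ^ 2 + fps_const \<eta> * fps_X + fps_const \<sigma>) * (fps_const t + fps_const \<tau>) * \<phi> ^ 2
         + ((fps_const \<theta> - fps_const t * fps_const \<eta>) * fps_X - (2 * fps_const t * fps_const \<sigma> + fps_const \<sigma> * fps_const \<tau> + 1)) * \<phi>
         + (fps_const t * fps_const \<sigma> + 1) = 0" by (simp only: c)
  show ?thesis unfolding G c
    by (rule ring_id2) (use hyp' in \<open>simp only: power2_eq_square\<close>)
qed

lemma eq_comp:
  "(qscale c0 (qmul H qF) = qadd (qadd (qadd (qadd (qadd qE (qscale \<eta> qF)) (qscale \<sigma> (qmul qF qF))) (qscale c1 H)) (qscale c2 (qmul qF H))) (qscale c3 (qmul H H)))
  \<longleftrightarrow> (\<forall>n. smult c0 (H (Suc n)) = (1 + monom \<eta> 1 + monom \<sigma> 2) * monom 1 n + smult c1 (H n) + smult c2 (monom 1 1 * H n) + smult c3 (lmap H (H n)))"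
  apply (simp only: qA)
  apply (simp only: fun_eq_iff qadd_def qscale_def)
  apply (simp only: qmul_H_F qmul_F_H)
  apply (simp add: qmul_lmap)
  done

theorem lemma3p1:
  fixes \<eta> \<theta> \<sigma> \<tau> t :: real and \<phi> :: "real fps" and H :: qseq
  assumes "\<sigma> \<ge> 0" and "\<tau> \<ge> 0" and "\<sigma> * \<tau> \<noteq> 1" and "t > 0"
    and "fps_nth \<phi> 0 = 1"
    and "(fps_X ^ 2 + fps_const \<eta> * fps_X + fps_const \<sigma>) * fps_const (t + \<tau>) * \<phi> ^ 2
         + (fps_const (\<theta> - t * \<eta>) * fps_X - fps_const (2 * t * \<sigma> + \<sigma> * \<tau> + 1)) * \<phi>
         + fps_const (t * \<sigma> + 1) = 0"
    and "H 0 = 0"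
  shows "qscale (1 + \<sigma> * t) (qmul H qF) =
           qadd (qadd (qadd (qadd (qadd qE (qscale \<eta> qF)) (qscale \<sigma> (qmul qF qF)))
             (qscale (\<theta> - \<eta> * t) H))
             (qscale (- (\<sigma> * (t + \<tau>))) (qmul qF H)))
             (qscale ((t + \<tau>) * (1 + \<sigma> * t)) (qmul H H))
         \<longleftrightarrow>
         H = qscale (1 / (1 + \<sigma> * t))
               (qmul (qmul (qadd (qadd qE (qscale \<eta> qF)) (qscale \<sigma> (qmul qF qF))) (qseries_D \<phi>)) qD)"
proof -
  define a where "a = (1 + monom \<eta> 1 + monom \<sigma> 2 :: real poly)"
  define \<psi> where "\<psi> = \<phi> * fps_X"
  define s where "s = 1 + \<sigma> * t"
  define T where "T = t + \<tau>"
  define Hs where "Hs = (\<lambda>n. smult (1 / s) (a * S \<psi> n))"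
  define R where "R G n = a * monom 1 n + smult (\<theta> - \<eta> * t) (G n) + smult (- (\<sigma> * T)) (monom 1 1 * G n)
      + smult (T * s) (lmap G (G n))" for G :: qseq and n
  have s_pos: "s > 0" using assms(1,4) unfolding s_def by (simp add: add_pos_nonneg)
  have h0: "fps_nth \<phi> 0 = 1" by fact
  have Hform: "qscale (1 / (1 + \<sigma> * t))
               (qmul (qmul (qadd (qadd qE (qscale \<eta> qF)) (qscale \<sigma> (qmul qF qF))) (qseries_D \<phi>)) qD) = Hs"
    unfolding Hstar Hs_def a_def \<psi>_def s_def ..
  have EQ: "\<And>G. (qscale (1 + \<sigma> * t) (qmul G qF) =
           qadd (qadd (qadd (qadd (qadd qE (qscale \<eta> qF)) (qscale \<sigma> (qmul qF qF)))
             (qscale (\<theta> - \<eta> * t) G))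
             (qscale (- (\<sigma> * (t + \<tau>))) (qmul qF G)))
             (qscale ((t + \<tau>) * (1 + \<sigma> * t)) (qmul G G)))
       \<longleftrightarrow> (\<forall>n. smult s (G (Suc n)) = R G n)"
    unfolding eq_comp R_def a_def s_def T_def ..
  have Spsi0: "S \<psi> 0 = 0" by (simp add: poly_eq_iff coeff_S \<psi>_def)
  have SpsiSuc: "S \<psi> (Suc n) = S \<phi> n" for n
    unfolding \<psi>_def by (simp only: S_Suc fps_shift_times_fps_X') simp
  have psi_nth: "fps_nth \<psi> k = (if k = 0 then 0 else fps_nth \<phi> (k - 1))" for k
    by (simp add: \<psi>_def)
  have lH: "lmap Hs q = smult (1 / s) (a * lmap (S \<psi>) q)" for q
    unfolding Hs_def by (simp only: lmap_psmult lmap_pmult)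
  define g where "g = \<psi> + fps_const \<eta> * \<phi> + fps_const \<sigma> * fps_shift 1 \<phi>"
  have l2: "lmap (S \<psi>) (a * q) = lmap (S g) q + smult \<sigma> (monom 1 1 * q)" for q
    unfolding a_def \<psi>_def g_def by (rule lmap_Sa[OF h0])
  have fid: "fps_const s * \<phi> = fps_const s * 1 + fps_const (\<theta> - \<eta> * t) * \<psi> + fps_const T * (g * \<psi>)"
    unfolding s_def T_def g_def \<psi>_def by (rule series_id[OF h0 assms(6)])
  have Ex: "smult s (Hs (Suc n)) = R Hs n" for n
  proof -
    define K where "K = S \<psi> n"
    have h1: "Hs (Suc n) = smult (1 / s) (a * S \<phi> n)" by (simp add: Hs_def SpsiSuc)
    have h2: "lmap Hs (Hs n) = smult (1 / s) (a * smult (1 / s) (S (g * \<psi>) n + smult \<sigma> (monom 1 1 * K)))"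
      unfolding lH by (simp only: Hs_def lmap_smult l2 S_mult K_def)
    have rel: "smult s (S \<phi> n) = smult s (monom 1 n) + smult (\<theta> - \<eta> * t) K + smult T (S (g * \<psi>) n)"
      using arg_cong[of _ _ "\<lambda>f. S f n", OF fid] by (simp only: S_add S_const S_one K_def)
    have rel2: "smult s (a * S \<phi> n) = smult s (a * monom 1 n) + smult (\<theta> - \<eta> * t) (a * K) + smult T (a * S (g * \<psi>) n)"
      using arg_cong[of _ _ "\<lambda>p. a * p", OF rel] by (simp add: distrib_left)
    have xa: "monom 1 1 * (a * K) = a * (monom 1 1 * K)" by (simp only: mult.left_commute)
    have HsK: "Hs n = smult (1 / s) (a * K)" by (simp add: Hs_def K_def)
    show ?thesis
      unfolding R_def h1 h2 unfolding HsK
    proof (rule poly_eqI)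
      fix m
      have r: "s * coeff (a * S \<phi> n) m = s * coeff (a * monom 1 n) m + (\<theta> - \<eta> * t) * coeff (a * K) m
          + T * coeff (a * S (g * \<psi>) n) m"
        using arg_cong[of _ _ "\<lambda>p. coeff p m", OF rel2] by simp
      then have r2: "s * (s * (s * coeff (a * S \<phi> n) m)) = s * (s * (s * coeff (a * monom 1 n) m + (\<theta> - \<eta> * t) * coeff (a * K) m
          + T * coeff (a * S (g * \<psi>) n) m))" by simp
      show "coeff (smult s (smult (1 / s) (a * S \<phi> n))) m = coeff (a * monom 1 n + smult (\<theta> - \<eta> * t) (smult (1 / s) (a * K)) +
          smult (- (\<sigma> * T)) (monom 1 1 * smult (1 / s) (a * K)) +
          smult (T * s) (smult (1 / s) (a * smult (1 / s) (S (g * \<psi>) n + smult \<sigma> (monom 1 1 * K))))) m"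
        using s_pos r2 by (simp add: xa distrib_left field_simps)
    qed
  qed
  have Hs0: "Hs 0 = 0" by (simp add: Hs_def Spsi0)
  have cHs: "coeff (Hs n) m = (1 / s) * (coeff (S \<psi> n) m + (if m < 1 then 0 else \<eta> * coeff (S \<psi> n) (m - 1))
      + (if m < 2 then 0 else \<sigma> * coeff (S \<psi> n) (m - 2)))" for n m
    unfolding Hs_def a_def by (simp only: coeff_smult coeff_aK)
  have degHs: "degree (Hs n) \<le> Suc (Suc n)" for n
    by (rule degree_le) (auto simp: cHs coeff_S)
  have c1: "coeff (Hs n) (Suc n) = (if n = 0 then 0 else \<sigma> / s)" for n
    by (cases n) (auto simp: cHs coeff_S psi_nth h0)
  have c2: "coeff (Hs n) (Suc (Suc n)) = 0" for n
    by (auto simp: cHs coeff_S psi_nth)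
  have Un: "G = Hs" if EG: "\<forall>n. smult s (G (Suc n)) = R G n" and G0: "G 0 = 0" for G
  proof -
    have "\<forall>j\<le>n. G j = Hs j" for n
    proof (induction n)
      case 0
      then show ?case using G0 Hs0 by simp
    next
      case (Suc n)
      have Gn: "G n = Hs n" using Suc.IH by simp
      define c where "c = coeff (Hs n) (Suc n)"
      have lm: "lmap G (Hs n) - lmap Hs (Hs n) = smult c (G (Suc n) - Hs (Suc n))"
      proof -
        have "lmap G (Hs n) - lmap Hs (Hs n) = (\<Sum>j\<le>Suc (Suc n). smult (coeff (Hs n) j) (G j - Hs j))"
          by (simp add: lmap_le[OF degHs] sum_subtractf smult_diff_right)
        also have "\<dots> = (\<Sum>j\<le>n. smult (coeff (Hs n) j) (G j - Hs j)) + smult c (G (Suc n) - Hs (Suc n))"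
          by (simp add: c2 c_def)
        also have "(\<Sum>j\<le>n. smult (coeff (Hs n) j) (G j - Hs j)) = 0"
          using Suc.IH by (intro sum.neutral) auto
        finally show ?thesis by simp
      qed
      have "smult s (G (Suc n)) - smult s (Hs (Suc n)) = R G n - R Hs n"
        using EG Ex by simp
      also have "\<dots> = smult (T * s) (lmap G (Hs n) - lmap Hs (Hs n))"
        unfolding R_def Gn by (simp add: smult_diff_right)
      finally have "smult s (G (Suc n) - Hs (Suc n)) = smult (T * s * c) (G (Suc n) - Hs (Suc n))"
        unfolding lm by (simp add: smult_diff_right)
      then have "smult (s - T * s * c) (G (Suc n) - Hs (Suc n)) = 0"
        by (simp add: smult_diff_left)
      moreover have "s - T * s * c \<noteq> 0"
      proof (cases "n = 0")
        case True then show ?thesis using s_pos by (simp add: c_def c1)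
      next
        case False
        then have "s - T * s * c = 1 - \<sigma> * \<tau>" using s_pos by (simp add: c_def c1 s_def T_def field_simps)
        then show ?thesis using assms(3) by simp
      qed
      ultimately have "G (Suc n) = Hs (Suc n)" by simp
      then show ?case using Suc.IH le_Suc_eq by auto
    qed
    then show ?thesis by auto
  qed
  show ?thesis
  proof
    assume L: "qscale (1 + \<sigma> * t) (qmul H qF) =
           qadd (qadd (qadd (qadd (qadd qE (qscale \<eta> qF)) (qscale \<sigma> (qmul qF qF)))
             (qscale (\<theta> - \<eta> * t) H))
             (qscale (- (\<sigma> * (t + \<tau>))) (qmul qF H)))
             (qscale ((t + \<tau>) * (1 + \<sigma> * t)) (qmul H H))"
    have "H = Hs" using Un[of H] L[unfolded EQ] assms(7) by blast
    then show "H = qscale (1 / (1 + \<sigma> * t))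
               (qmul (qmul (qadd (qadd qE (qscale \<eta> qF)) (qscale \<sigma> (qmul qF qF))) (qseries_D \<phi>)) qD)"
      using Hform by simp
  next
    assume "H = qscale (1 / (1 + \<sigma> * t))
               (qmul (qmul (qadd (qadd qE (qscale \<eta> qF)) (qscale \<sigma> (qmul qF qF))) (qseries_D \<phi>)) qD)"
    then have "H = Hs" using Hform by simp
    then show "qscale (1 + \<sigma> * t) (qmul H qF) =
           qadd (qadd (qadd (qadd (qadd qE (qscale \<eta> qF)) (qscale \<sigma> (qmul qF qF)))
             (qscale (\<theta> - \<eta> * t) H))
             (qscale (- (\<sigma> * (t + \<tau>))) (qmul qF H)))
             (qscale ((t + \<tau>) * (1 + \<sigma> * t)) (qmul H H))"
      unfolding EQ using Ex by simp
  qed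
qed

end
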